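(* In the bosonic setting described in the context, if $g\in\mathrm{Sp}(V)$ then the Gaussian vector $f_{T_g}$ satisfies $$a_{gJg^{-1}}(gv)\,f_{T_g}=0\quad\text{for all }v\in V,$$ where $a_{gJg^{-1}}(gv)=\tfrac12\bigl(\phi(gv)+i\,\phi(gJv)\bigr)$.
   Context: Let $V$ be a real vector space of dimension $2m$ with a nondegenerate skew-symmetric bilinear form $s$ and a real-linear $J$ with $J^2=-1$, $s(Ju,Jv)=s(u,v)$, and $s(u,Ju)>0$ for $u\ne0$. Put $d(u,v):=s(u,Jv)$ (a real inner product; $A^t$ denotes the $d$-transpose). Make $V$ a complex vector space by $(a+bi)v:=av+bJv$ with Hermitian inner product $\langle u|v\rangle:=d(u,v)+is(u,v)$ (antilinear in $u$). $\mathrm{Sp}(V)$ is the group of real-linear $g$ with $s(gu,gv)=s(u,v)$. For $g\in\mathrm{Sp}(V)$, $p_g:=\tfrac12(g-JgJ)$ (which is invertible), $q_g:=\tfrac12(g+JgJ)$, and $T_g:=q_gp_g^{-1}$; $T_g$ is antilinear ($T_gJ=-JT_g$), $d$-symmetric, and $1-T_g^2$ is positive definite. The bosonic Fock space $\mathcal B(V)$ is the Hilbert space of antiholomorphic $F:V\to\mathbb C$ with $\int_V|F(u)|^2e^{-\frac12\langle u|u\rangle}\,du<\infty$, $du=(2\pi)^{-m}$ times Lebesgue measure. Weyl operators: $\beta(v)F(u):=e^{\frac14\langle 2u-v|v\rangle}F(u-v)$; $\phi(v)$ is the self-adjoint operator with $\exp(it\phi(v))=\beta(\sqrt2\,tv)$.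 For a complex structure $K$ on $V$, $a_K(w):=\tfrac12(\phi(w)+i\phi(Kw))$. For an antilinear $d$-symmetric $T$ with $1-T^2>0$, the Gaussian is $f_T(u):=\exp\bigl(\tfrac14\langle u|Tu\rangle\bigr)\in\mathcal B(V)$. *)

theory Defs
  imports "HOL-Analysis.Analysis"
begin

text \<open>The real vector space V is modelled by a finite-dimensional type 'v.
  s is the symplectic form, J the complex structure.\<close>

definition herm :: "('v::real_vector \<Rightarrow> 'v \<Rightarrow> real) \<Rightarrow> ('v \<Rightarrow> 'v) \<Rightarrow> 'v \<Rightarrow> 'v \<Rightarrow> complex" where
  "herm s J u v = complex_of_real (s u (J v)) + \<i> * complex_of_real (s u v)"

definition fock_norm2 :: "('v::euclidean_space \<Rightarrow> 'v \<Rightarrow> real) \<Rightarrow> ('v \<Rightarrow> 'v) \<Rightarrow> ('v \<Rightarrow> complex) \<Rightarrow> ennreal" where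
  "fock_norm2 s J F =
     ennreal (inverse ((2 * pi) ^ (DIM('v) div 2))) *
     (\<integral>\<^sup>+ u. ennreal ((cmod (F u))\<^sup>2 * exp (- (1/2) * s u (J u))) \<partial>lborel)"

text \<open>antiholomorphic with respect to the complex structure (a+bi)v = av + bJv\<close>
definition antiholomorphic :: "('v::real_normed_vector \<Rightarrow> 'v) \<Rightarrow> ('v \<Rightarrow> complex) \<Rightarrow> bool" where
  "antiholomorphic J F \<longleftrightarrow>
     (\<forall>x. \<exists>D. (F has_derivative D) (at x) \<and> (\<forall>w. D (J w) = - \<i> * D w))"

definition fock_space :: "('v::euclidean_space \<Rightarrow> 'v \<Rightarrow> real) \<Rightarrow> ('v \<Rightarrow> 'v) \<Rightarrow> ('v \<Rightarrow> complex) set" where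
  "fock_space s J = {F. antiholomorphic J F \<and> fock_norm2 s J F < \<infinity>}"

definition weyl :: "('v::real_vector \<Rightarrow> 'v \<Rightarrow> real) \<Rightarrow> ('v \<Rightarrow> 'v) \<Rightarrow> 'v \<Rightarrow> ('v \<Rightarrow> complex) \<Rightarrow> ('v \<Rightarrow> complex)" where
  "weyl s J v F = (\<lambda>u. exp ((1/4) * herm s J (2 *\<^sub>R u - v) v) * F (u - v))"

text \<open>phi(v) F = G: the self-adjoint generator of the unitary group t |-> beta(sqrt 2 t v),
  i.e. F is in its domain and (beta(sqrt 2 t v) F - F)/t tends to i G in the Fock norm (Stone).\<close>
definition has_phi :: "('v::euclidean_space \<Rightarrow> 'v \<Rightarrow> real) \<Rightarrow> ('v \<Rightarrow> 'v) \<Rightarrow> 'v \<Rightarrow> ('v \<Rightarrow> complex) \<Rightarrow> ('v \<Rightarrow> complex) \<Rightarrow> bool" where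
  "has_phi s J v F G \<longleftrightarrow> F \<in> fock_space s J \<and> G \<in> fock_space s J \<and>
     ((\<lambda>t::real. fock_norm2 s J
        (\<lambda>u. (weyl s J ((sqrt 2 * t) *\<^sub>R v) F u - F u) / complex_of_real t - \<i> * G u))
       \<longlongrightarrow> 0) (at 0)"

definition has_a :: "('v::euclidean_space \<Rightarrow> 'v \<Rightarrow> real) \<Rightarrow> ('v \<Rightarrow> 'v) \<Rightarrow> ('v \<Rightarrow> 'v) \<Rightarrow> 'v \<Rightarrow> ('v \<Rightarrow> complex) \<Rightarrow> ('v \<Rightarrow> complex) \<Rightarrow> bool" where
  "has_a s J K w F H \<longleftrightarrow> (\<exists>G1 G2. has_phi s J w F G1 \<and> has_phi s J (K w) F G2 \<and>
       (\<forall>u. H u = (G1 u + \<i> * G2 u) / 2))"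

definition symplectic :: "('v::real_vector \<Rightarrow> 'v \<Rightarrow> real) \<Rightarrow> ('v \<Rightarrow> 'v) \<Rightarrow> bool" where
  "symplectic s g \<longleftrightarrow> linear g \<and> (\<forall>u v. s (g u) (g v) = s u v)"

definition p_op :: "('v::real_vector \<Rightarrow> 'v) \<Rightarrow> ('v \<Rightarrow> 'v) \<Rightarrow> 'v \<Rightarrow> 'v" where
  "p_op J g = (\<lambda>u. (1/2) *\<^sub>R (g u - J (g (J u))))"

definition q_op :: "('v::real_vector \<Rightarrow> 'v) \<Rightarrow> ('v \<Rightarrow> 'v) \<Rightarrow> 'v \<Rightarrow> 'v" where
  "q_op J g = (\<lambda>u. (1/2) *\<^sub>R (g u + J (g (J u))))"

definition T_op :: "('v::real_vector \<Rightarrow> 'v) \<Rightarrow> ('v \<Rightarrow> 'v) \<Rightarrow> 'v \<Rightarrow> 'v" where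
  "T_op J g = q_op J g \<circ> inv (p_op J g)"

definition gaussian :: "('v::real_vector \<Rightarrow> 'v \<Rightarrow> real) \<Rightarrow> ('v \<Rightarrow> 'v) \<Rightarrow> ('v \<Rightarrow> 'v) \<Rightarrow> 'v \<Rightarrow> complex" where
  "gaussian s J T = (\<lambda>u. exp ((1/4) * herm s J u (T u)))"

end

theory Submission
  imports Defs "HOL-Probability.Probability"
begin


lemma gauss1_finite:
  fixes c :: real assumes c: "c > 0"
  shows "(\<integral>\<^sup>+x. ennreal (exp (- c * x\<^sup>2)) \<partial>lborel) < \<infinity>"
proof -
  define \<sigma> where "\<sigma> = sqrt (1 / (2 * c))"
  have sp: "\<sigma> > 0" using c by (simp add: \<sigma>_def)
  have s2: "2 * \<sigma>\<^sup>2 = 1 / c" using c by (simp add: \<sigma>_def)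
  define K where "K = sqrt (2 * pi * \<sigma>\<^sup>2)"
  have K: "K > 0" using sp by (simp add: K_def)
  have eq: "exp (- c * x\<^sup>2) = K * normal_density 0 \<sigma> x" for x
    using K c s2 sp by (simp add: normal_density_def K_def field_simps)
  have "(\<integral>\<^sup>+x. ennreal (exp (- c * x\<^sup>2)) \<partial>lborel) = (\<integral>\<^sup>+x. ennreal K * ennreal (normal_density 0 \<sigma> x) \<partial>lborel)"
    apply (rule nn_integral_cong)
    apply (subst eq)
    using K by (simp add: ennreal_mult)
  also have "\<dots> = ennreal K * (\<integral>\<^sup>+x. ennreal (normal_density 0 \<sigma> x) \<partial>lborel)"
    by (rule nn_integral_cmult) simp
  also have "(\<integral>\<^sup>+x. ennreal (normal_density 0 \<sigma> x) \<partial>lborel) = ennreal 1"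
    using sp by (subst nn_integral_eq_integral) (auto intro: integrable_normal_density)
  finally show ?thesis by (simp add: ennreal_mult'[symmetric])
qed

lemma gauss_finite:
  fixes c :: real assumes c: "c > 0"
  shows "(\<integral>\<^sup>+u. ennreal (exp (- c * (norm u)\<^sup>2)) \<partial>(lborel :: 'a::euclidean_space measure)) < \<infinity>"
proof -
  have "ennreal (exp (- c * (norm u)\<^sup>2)) = (\<Prod>b\<in>Basis. ennreal (exp (- c * (u \<bullet> b)\<^sup>2)))" for u :: 'a
  proof -
    have "(norm u)\<^sup>2 = (\<Sum>b\<in>Basis. (u \<bullet> b)\<^sup>2)"
      unfolding power2_norm_eq_inner by (subst euclidean_inner) (simp add: power2_eq_square)
    then have "exp (- c * (norm u)\<^sup>2) = (\<Prod>b\<in>Basis. exp (- c * (u \<bullet> b)\<^sup>2))"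
      by (simp add: sum_distrib_left exp_sum[symmetric] sum_negf)
    then show ?thesis by (simp add: prod_ennreal)
  qed
  then have "(\<integral>\<^sup>+u. ennreal (exp (- c * (norm u)\<^sup>2)) \<partial>(lborel :: 'a measure))
     = (\<Prod>b\<in>(Basis::'a set). (\<integral>\<^sup>+x. ennreal (exp (- c * x\<^sup>2)) \<partial>lborel))"
    by (simp only:) (rule nn_integral_lborel_prod, auto)
  also have "\<dots> < \<infinity>"
    using gauss1_finite[OF c] by (simp add: power_less_top_ennreal)
  finally show ?thesis .
qed



lemma exp_quad: fixes z :: complex
  shows "norm (exp z - 1 - z) \<le> (norm z)\<^sup>2 * exp (norm z)"
proof -
  have sums: "(\<lambda>k. z ^ (k + 2) /\<^sub>R fact (k + 2)) sums (exp z - (\<Sum>k<2. z ^ k /\<^sub>R fact k))"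
    by (intro sums_split_initial_segment exp_converges)
  have e1: "exp z - 1 - z = (\<Sum>k. z ^ (k + 2) /\<^sub>R fact (k + 2))"
    using sums by (simp add: sums_iff eval_nat_numeral)
  have sn: "summable (\<lambda>k. norm (z ^ (k + 2) /\<^sub>R fact (k + 2)))"
    using summable_norm_exp[of z]
    by (intro summable_ignore_initial_segment) (simp add: scaleR_conv_of_real)
  have se: "summable (\<lambda>k. (norm z)\<^sup>2 * (norm z ^ k /\<^sub>R fact k))"
    by (intro summable_mult summable_exp_generic)
  have "norm (exp z - 1 - z) \<le> (\<Sum>k. norm (z ^ (k + 2) /\<^sub>R fact (k + 2)))"
    unfolding e1 by (rule summable_norm[OF sn])
  also have "\<dots> \<le> (\<Sum>k. (norm z)\<^sup>2 * (norm z ^ k /\<^sub>R fact k))"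
  proof (rule suminf_le[OF _ sn se])
    fix k
    have "fact k \<le> (fact (k + 2) :: real)" by (intro fact_mono) auto
    then have "norm z ^ k / fact (k + 2) \<le> norm z ^ k / fact k"
      by (intro divide_left_mono) auto
    then have i: "(norm z)\<^sup>2 * (norm z ^ k / fact (k + 2)) \<le> (norm z)\<^sup>2 * (norm z ^ k / fact k)"
      by (intro mult_left_mono) auto
    have "norm (z ^ (k + 2) /\<^sub>R fact (k + 2)) = (norm z)\<^sup>2 * (norm z ^ k / fact (k + 2))"
      by (simp add: norm_power power_add divide_inverse mult.commute norm_mult power2_eq_square)
    also note i
    also have "(norm z)\<^sup>2 * (norm z ^ k / fact k) = (norm z)\<^sup>2 * (norm z ^ k /\<^sub>R fact k)"
      by (simp add: divide_inverse_commute)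
    finally show "norm (z ^ (k + 2) /\<^sub>R fact (k + 2)) \<le> (norm z)\<^sup>2 * (norm z ^ k /\<^sub>R fact k)" .
  qed
  also have "\<dots> = (norm z)\<^sup>2 * (\<Sum>k. norm z ^ k /\<^sub>R fact k)"
    by (rule suminf_mult[OF summable_exp_generic])
  also have "\<dots> = (norm z)\<^sup>2 * exp (norm z)"
    by (simp only: exp_def)
  finally show ?thesis .
qed

lemma sq_le_exp: fixes y :: real assumes "y \<ge> 0" shows "y\<^sup>2 \<le> 4 * exp y"
proof -
  have "y / 2 \<le> exp (y / 2)" using exp_ge_add_one_self[of "y/2"] by linarith
  then have "(y/2)\<^sup>2 \<le> (exp (y/2))\<^sup>2" using assms by (intro power_mono) auto
  also have "(exp (y/2))\<^sup>2 = exp y" by (simp add: power2_eq_square exp_add[symmetric])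
  finally show ?thesis by (simp add: power_divide)
qed

lemma qbound:
  fixes t :: real and a b :: complex
  assumes t0: "t \<noteq> 0" and t1: "\<bar>t\<bar> \<le> 1"
  shows "norm ((exp (complex_of_real t * a + (complex_of_real t)\<^sup>2 * b) - 1) / complex_of_real t - a)
     \<le> \<bar>t\<bar> * (4 + norm b) * exp (2 * (norm a + norm b))"
proof -
  define z where "z = complex_of_real t * a + (complex_of_real t)\<^sup>2 * b"
  define y where "y = norm a + norm b"
  have y0: "y \<ge> 0" by (simp add: y_def)
  have tt: "t\<^sup>2 \<le> \<bar>t\<bar>"
  proof -
    have "t\<^sup>2 = \<bar>t\<bar> * \<bar>t\<bar>" by (simp add: power2_eq_square)
    also have "\<dots> \<le> \<bar>t\<bar> * 1" using t1 by (intro mult_left_mono) auto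
    finally show ?thesis by simp
  qed
  have nz: "norm z \<le> \<bar>t\<bar> * y"
  proof -
    have "norm z \<le> \<bar>t\<bar> * norm a + t\<^sup>2 * norm b"
      unfolding z_def using norm_triangle_ineq[of "complex_of_real t * a" "(complex_of_real t)\<^sup>2 * b"]
      by (simp add: norm_mult norm_power)
    also have "\<dots> \<le> \<bar>t\<bar> * norm a + \<bar>t\<bar> * norm b" using tt by (intro add_left_mono mult_right_mono) auto
    finally show ?thesis by (simp add: y_def algebra_simps)
  qed
  have nz1: "norm z \<le> y" using nz t1 y0 by (meson mult_left_le_one_le abs_ge_zero order_trans)
  have split: "(exp z - 1) / complex_of_real t - a = (exp z - 1 - z) / complex_of_real t + complex_of_real t * b"
  proof -
    have "z / complex_of_real t = a + complex_of_real t * b"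
      using t0 by (simp add: z_def add_divide_distrib power2_eq_square)
    then show ?thesis by (simp add: diff_divide_distrib)
  qed
  have A0: "norm ((exp z - 1) / complex_of_real t - a) \<le> norm (exp z - 1 - z) / \<bar>t\<bar> + \<bar>t\<bar> * norm b"
  proof -
    have "norm ((exp z - 1 - z) / complex_of_real t + complex_of_real t * b)
       \<le> norm ((exp z - 1 - z) / complex_of_real t) + norm (complex_of_real t * b)"
      by (rule norm_triangle_ineq)
    then show ?thesis unfolding split by (simp add: norm_divide norm_mult)
  qed
  have "norm (exp z - 1 - z) / \<bar>t\<bar> \<le> (\<bar>t\<bar> * y)\<^sup>2 * exp y / \<bar>t\<bar>"
  proof (intro divide_right_mono)
    have "norm (exp z - 1 - z) \<le> (norm z)\<^sup>2 * exp (norm z)" by (rule exp_quad)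
    also have "\<dots> \<le> (\<bar>t\<bar> * y)\<^sup>2 * exp y"
      using nz nz1 by (intro mult_mono power_mono) auto
    finally show "norm (exp z - 1 - z) \<le> (\<bar>t\<bar> * y)\<^sup>2 * exp y" .
  qed simp
  also have "(\<bar>t\<bar> * y)\<^sup>2 * exp y / \<bar>t\<bar> = \<bar>t\<bar> * (y\<^sup>2 * exp y)"
    using t0 by (simp add: power2_eq_square)
  finally have A: "norm ((exp z - 1) / complex_of_real t - a) \<le> \<bar>t\<bar> * (y\<^sup>2 * exp y) + \<bar>t\<bar> * norm b"
    using A0 by linarith
  have B: "y\<^sup>2 * exp y \<le> 4 * exp (2 * y)"
  proof -
    have "y\<^sup>2 * exp y \<le> 4 * exp y * exp y"
      using sq_le_exp[OF y0] by (intro mult_right_mono) auto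
    also have "exp (2 * y) = exp y * exp y" by (metis exp_add mult_2)
    then have "4 * exp y * exp y = 4 * exp (2 * y)" by simp
    finally show ?thesis .
  qed
  have C: "norm b \<le> norm b * exp (2 * y)"
  proof -
    have "1 \<le> exp (2 * y)" using y0 by simp
    then have "norm b * 1 \<le> norm b * exp (2 * y)" by (intro mult_left_mono) auto
    then show ?thesis by simp
  qed
  have "\<bar>t\<bar> * (y\<^sup>2 * exp y) + \<bar>t\<bar> * norm b \<le> \<bar>t\<bar> * (4 * exp (2 * y)) + \<bar>t\<bar> * (norm b * exp (2 * y))"
    using B C by (intro add_mono mult_left_mono) auto
  also have "\<dots> = \<bar>t\<bar> * (4 + norm b) * exp (2 * y)" by (simp add: algebra_simps)
  finally have "norm ((exp z - 1) / complex_of_real t - a) \<le> \<bar>t\<bar> * (4 + norm b) * exp (2 * y)"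
    using A by linarith
  then show ?thesis by (simp add: z_def y_def)
qed



locale sympl =
  fixes s :: "'v::euclidean_space \<Rightarrow> 'v \<Rightarrow> real" and J g :: "'v \<Rightarrow> 'v"
  assumes bil: "bilinear s"
    and skew: "\<And>u v. s u v = - s v u"
    and nondeg: "\<And>u. (\<forall>v. s u v = 0) \<Longrightarrow> u = 0"
    and linJ: "linear J"
    and JJ: "\<And>v. J (J v) = - v"
    and sJJ: "\<And>u v. s (J u) (J v) = s u v"
    and pos: "\<And>u. u \<noteq> 0 \<Longrightarrow> s u (J u) > 0"
    and symp: "symplectic s g"
begin

lemma linG: "linear g" and sg: "\<And>u v. s (g u) (g v) = s u v"
  using symp by (auto simp: symplectic_def)

lemmas sl = bilinear_ladd[OF bil] bilinear_radd[OF bil] bilinear_lmul[OF bil] bilinear_rmul[OF bil]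
  bilinear_lneg[OF bil] bilinear_rneg[OF bil] bilinear_lsub[OF bil] bilinear_rsub[OF bil]
  bilinear_lzero[OF bil] bilinear_rzero[OF bil]
lemmas Jl = linear_add[OF linJ] linear_diff[OF linJ] linear_neg[OF linJ] linear_0[OF linJ] linear_cmul[OF linJ]
lemmas gl = linear_add[OF linG] linear_diff[OF linG] linear_neg[OF linG] linear_0[OF linG] linear_cmul[OF linG]

lemma dsym: "s u (J v) = s v (J u)"
  by (metis skew sJJ JJ sl(6))

lemma sJl: "s (J u) v = - s u (J v)"
proof -
  have "s (J u) v = s (J (J u)) (J v)" by (rule sJJ[symmetric])
  then show ?thesis by (simp add: JJ sl)
qed

lemma sJr: "s u (J v) = - s (J u) v"
  by (simp add: sJl)

lemma dpos: "s u (J u) \<ge> 0"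
  using pos[of u] by (cases "u = 0") (auto simp: sl)

lemma d_ineq: "2 * s a (J b) \<le> s a (J a) + s b (J b)"
proof -
  have "0 \<le> s (a - b) (J (a - b))" by (rule dpos)
  also have "\<dots> = s a (J a) + s b (J b) - s a (J b) - s b (J a)"
    by (simp add: sl Jl algebra_simps)
  finally show ?thesis using dsym[of b a] by simp
qed

lemma injG: "inj g"
proof (rule injI)
  fix x y assume "g x = g y"
  then have "g (x - y) = 0" by (simp add: gl)
  then have "\<forall>v. s (x - y) v = 0"
    by (metis sg sl(9))
  then show "x = y" using nondeg[of "x - y"] by simp
qed

abbreviation "p \<equiv> p_op J g"
abbreviation "q \<equiv> q_op J g"
abbreviation "T \<equiv> T_op J g"

lemma linp: "linear p"
  unfolding p_op_def
  by (intro linear_compose_scale_right linear_compose_sub linG linear_compose[OF linJ, unfolded o_def]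
      linear_compose[OF linG, unfolded o_def] linear_compose[OF linJ linG, unfolded o_def] linJ)

lemma linq: "linear q"
  unfolding q_op_def
  by (intro linear_compose_scale_right linear_compose_add linG linear_compose[OF linJ, unfolded o_def]
      linear_compose[OF linG, unfolded o_def] linear_compose[OF linJ linG, unfolded o_def] linJ)

lemmas pl = linear_add[OF linp] linear_diff[OF linp] linear_neg[OF linp] linear_0[OF linp] linear_cmul[OF linp]
lemmas ql = linear_add[OF linq] linear_diff[OF linq] linear_neg[OF linq] linear_0[OF linq] linear_cmul[OF linq]

lemma pJ: "p (J x) = J (p x)"
  by (simp add: p_op_def JJ gl Jl algebra_simps)

lemma qJ: "q (J x) = - J (q x)"
  by (simp add: q_op_def JJ gl Jl algebra_simps)

lemma pq: "p x + q x = g x"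
proof -
  have a: "(1/2) *\<^sub>R (a - b) + (1/2) *\<^sub>R (a + b) = (1/2) *\<^sub>R ((a - b) + (a + b))" for a b :: 'v
    by (simp only: scaleR_add_right)
  have b: "(a - b) + (a + b) = 2 *\<^sub>R a" for a b :: 'v by (simp add: scaleR_2)
  show ?thesis unfolding p_op_def q_op_def a b by simp
qed

lemma half_ident: "s ((1/2) *\<^sub>R (a - b)) (J ((1/2) *\<^sub>R (a - b))) =
   s ((1/2) *\<^sub>R (a + b)) (J ((1/2) *\<^sub>R (a + b))) - s a (J b)"
  using dsym[of a b] by (simp add: sl Jl algebra_simps)

lemma key1: "s (p x) (J (p x)) = s x (J x) + s (q x) (J (q x))"
proof -
  have "s (p x) (J (p x)) = s (q x) (J (q x)) - s (g x) (J (J (g (J x))))"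
    unfolding p_op_def q_op_def by (rule half_ident)
  also have "s (g x) (J (J (g (J x)))) = - s x (J x)"
    by (simp add: JJ sl sg)
  finally show ?thesis by simp
qed

lemma injp: "inj p"
proof -
  have "x = 0" if "p x = 0" for x
  proof -
    have "s x (J x) \<le> 0" using key1[of x] that dpos[of "q x"] by (simp add: sl Jl)
    then show ?thesis using pos[of x] by fastforce
  qed
  then show ?thesis using linear_inj_iff_eq_0[OF linp] by blast
qed

lemma surjp: "surj p"
  using linear_injective_imp_surjective[OF linp injp] by simp

lemma p_invp[simp]: "p (inv p y) = y"
  using surjp by (simp add: surj_f_inv_f)

lemma invp_p[simp]: "inv p (p x) = x"
  using injp by simp

lemma lininvp: "linear (inv p)"
  using inj_linear_imp_inv_linear[OF linp injp] .

lemmas il = linear_add[OF lininvp] linear_diff[OF lininvp] linear_neg[OF lininvp] linear_0[OF lininvp] linear_cmul[OF lininvp]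

lemma invpJ: "inv p (J y) = J (inv p y)"
proof -
  have "J y = p (J (inv p y))" by (simp add: pJ)
  then show ?thesis by simp
qed

lemma T_eq: "T u = q (inv p u)"
  by (simp add: T_op_def)

lemma linT: "linear T"
  unfolding T_op_def by (rule linear_compose[OF lininvp linq])

lemmas Tl = linear_add[OF linT] linear_diff[OF linT] linear_neg[OF linT] linear_0[OF linT] linear_cmul[OF linT]

lemma TJ: "T (J u) = - J (T u)"
  by (simp add: T_eq invpJ qJ)

lemma pq_sym: "s (p x) (J (q y)) = s (p y) (J (q x))"
proof -
  have e: "4 * s (p x) (J (q y)) = s (g x) (J (g y)) - s (g (J x)) (J (g (J y)))" for x y
    by (simp add: p_op_def q_op_def sl Jl JJ sJJ sg sJl gl algebra_simps)
  show ?thesis using e[of x y] e[of y x] dsym[of "g x" "g y"] dsym[of "g (J x)" "g (J y)"] by simp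
qed

lemma Tsym: "s u (J (T w)) = s w (J (T u))"
  using pq_sym[of "inv p u" "inv p w"] by (simp add: T_eq)

lemma Tsym2: "s u (T w) = s w (T u)"
proof -
  have a: "s a b = - s a (J (J b))" for a b by (simp add: JJ sl)
  have "s u (T w) = s u (J (T (J w)))" by (simp add: TJ Jl sl JJ)
  also have "\<dots> = s (J w) (J (T u))" by (simp add: Tsym)
  also have "\<dots> = s w (T u)" by (simp add: sJJ)
  finally show ?thesis .
qed

definition R :: "'v \<Rightarrow> 'v" where "R x = g x - T (g x)"

lemma R_eq: "R x = p x - q (inv p (q x))"
proof -
  have "inv p (g x) = x + inv p (q x)"
    using pq[of x, symmetric] by (simp add: il)
  then show ?thesis unfolding R_def T_eq using pq[of x] by (simp add: ql algebra_simps)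
qed

lemma RJ: "R (J x) = J (R x)"
  by (simp add: R_eq pJ qJ invpJ il ql Jl)

lemma bbs: "bounded_bilinear s"
  using bil bilinear_conv_bounded_bilinear by blast

lemma blJ: "bounded_linear J"
  using linJ linear_conv_bounded_linear by blast

lemma d_lower: "\<exists>c>0. \<forall>x. c * (norm x)\<^sup>2 \<le> s x (J x)"
proof -
  have cont: "continuous_on (sphere 0 1) (\<lambda>x. s x (J x))"
    by (intro bounded_bilinear.continuous_on[OF bbs] continuous_on_id linear_continuous_on blJ)
  have ne: "sphere (0::'v) 1 \<noteq> {}"
    using norm_Basis[OF SOME_Basis] by (metis mem_sphere_0 empty_iff)
  obtain x0 where x0: "x0 \<in> sphere 0 1" and m: "\<And>y. y \<in> sphere 0 1 \<Longrightarrow> s x0 (J x0) \<le> s y (J y)"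
    using continuous_attains_inf[OF compact_sphere ne cont] by blast
  have x0nz: "x0 \<noteq> 0" using x0 by auto
  have c: "s x0 (J x0) > 0" using pos[OF x0nz] .
  have "s x0 (J x0) * (norm x)\<^sup>2 \<le> s x (J x)" for x
  proof (cases "x = 0")
    case True then show ?thesis by (simp add: sl Jl)
  next
    case False
    define y where "y = (1 / norm x) *\<^sub>R x"
    have y: "y \<in> sphere 0 1" using False by (simp add: y_def)
    have "s y (J y) = s x (J x) / (norm x)\<^sup>2"
      by (simp add: y_def sl Jl power2_eq_square)
    then have e: "s x (J x) = s y (J y) * (norm x)\<^sup>2" using False by (simp add: field_simps)
    show ?thesis unfolding e by (rule mult_right_mono[OF m[OF y]]) simp
  qed
  then show ?thesis using c by blast
qed

lemma Tpos: "\<exists>c>0. \<forall>u. c * (norm u)\<^sup>2 \<le> s u (J u) - s u (J (T u))"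
proof -
  obtain c0 where c0: "c0 > 0" "\<And>x. c0 * (norm x)\<^sup>2 \<le> s x (J x)" using d_lower by blast
  obtain B where B: "B > 0" "\<And>x. norm (p x) \<le> B * norm x" using linear_bounded_pos[OF linp] by blast
  have "c0 / (2 * B\<^sup>2) * (norm u)\<^sup>2 \<le> s u (J u) - s u (J (T u))" for u
  proof -
    define x where "x = inv p u"
    have u: "u = p x" by (simp add: x_def)
    have Tu: "T u = q x" by (simp add: x_def T_eq)
    have i1: "2 * s (p x) (J (q x)) \<le> s (p x) (J (p x)) + s (q x) (J (q x))" by (rule d_ineq)
    have i2: "s x (J x) / 2 \<le> s u (J u) - s u (J (T u))"
    proof -
      have "s u (J (T u)) = s (p x) (J (q x))" using Tu u by simp
      moreover have "s u (J u) = s (p x) (J (p x))" using u by simp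
      ultimately show ?thesis using i1 key1[of x] by linarith
    qed
    have nu: "norm u \<le> B * norm x" using B(2)[of x] u by simp
    have nu2: "(norm u)\<^sup>2 \<le> B\<^sup>2 * (norm x)\<^sup>2"
      using power_mono[OF nu, of 2] by (simp add: power_mult_distrib)
    have "c0 / (2 * B\<^sup>2) * (norm u)\<^sup>2 \<le> c0 / (2 * B\<^sup>2) * (B\<^sup>2 * (norm x)\<^sup>2)"
      using nu2 c0 B by (intro mult_left_mono) auto
    also have "\<dots> = c0 * (norm x)\<^sup>2 / 2" using B by (simp add: field_simps)
    also have "\<dots> \<le> s x (J x) / 2" using c0(2)[of x] by simp
    finally show ?thesis using i2 by linarith
  qed
  moreover have "c0 / (2 * B\<^sup>2) > 0" using c0 B by simp
  ultimately show ?thesis by blast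
qed

abbreviation "h \<equiv> herm s J"

lemma h_def: "h u v = complex_of_real (s u (J v)) + \<i> * complex_of_real (s u v)"
  by (simp add: herm_def)

lemma h_ladd: "h (a + b) c = h a c + h b c"
  by (simp add: h_def sl algebra_simps)
lemma h_radd: "h a (b + c) = h a b + h a c"
  by (simp add: h_def sl Jl algebra_simps)
lemma h_lsub: "h (a - b) c = h a c - h b c"
  by (simp add: h_def sl algebra_simps)
lemma h_rsub: "h a (b - c) = h a b - h a c"
  by (simp add: h_def sl Jl algebra_simps)
lemma h_lneg: "h (- a) c = - h a c"
  by (simp add: h_def sl algebra_simps)
lemma h_rneg: "h a (- c) = - h a c"
  by (simp add: h_def sl Jl algebra_simps)
lemma h_lscale: "h (r *\<^sub>R a) c = complex_of_real r * h a c"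
  by (simp add: h_def sl algebra_simps)
lemma h_rscale: "h a (r *\<^sub>R c) = complex_of_real r * h a c"
  by (simp add: h_def sl Jl algebra_simps)
lemma h_lzero: "h 0 c = 0"
  by (simp add: h_def sl)
lemma h_rzero: "h a 0 = 0"
  by (simp add: h_def sl Jl)

lemmas hl = h_ladd h_radd h_lsub h_rsub h_lneg h_rneg h_lscale h_rscale h_lzero h_rzero

lemma sJJr: "s u (J (J v)) = - s u v"
  by (metis JJ sl(6))

lemma hJr: "h u (J v) = \<i> * h u v"
  by (simp add: h_def sJJr algebra_simps)

lemma hJl: "h (J u) v = - \<i> * h u v"
  by (simp add: h_def sJJ sJl sJJr algebra_simps)

lemma hT_sym: "h u (T w) = h w (T u)"
  by (simp add: h_def Tsym Tsym2)

lemma Re_h: "Re (h u v) = s u (J v)"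
  by (simp add: h_def)

lemma bil_h: "bilinear h"
  unfolding bilinear_def
  by (auto intro!: linearI simp: hl scaleR_conv_of_real)

lemma bbh: "bounded_bilinear h"
  using bil_h bilinear_conv_bounded_bilinear by blast

abbreviation "F \<equiv> gaussian s J T"

definition Am :: "'v \<Rightarrow> 'v \<Rightarrow> complex" where
  "Am x u = complex_of_real (sqrt 2 / 2) * (h u x - h u (T x))"
definition Bc :: "'v \<Rightarrow> complex" where
  "Bc x = (1/2) * (h x (T x) - h x x)"
definition G :: "'v \<Rightarrow> 'v \<Rightarrow> complex" where
  "G x u = - \<i> * F u * Am x u"

lemma weyl_eq:
  "weyl s J ((sqrt 2 * t) *\<^sub>R x) F u = F u * exp (complex_of_real t * Am x u + (complex_of_real t)\<^sup>2 * Bc x)"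
proof -
  define r where "r = sqrt 2 * t"
  have r2: "(complex_of_real t)\<^sup>2 = complex_of_real r * complex_of_real r / 2"
    unfolding r_def of_real_mult[symmetric] by (simp add: power2_eq_square algebra_simps)
  have r1: "complex_of_real t * complex_of_real (sqrt 2 / 2) = complex_of_real r / 2"
    unfolding r_def of_real_mult[symmetric] by (simp add: algebra_simps)
  have sy: "h x (T u) = h u (T x)" by (rule hT_sym)
  have e: "(1/4) * h (2 *\<^sub>R u - r *\<^sub>R x) (r *\<^sub>R x) + (1/4) * h (u - r *\<^sub>R x) (T (u - r *\<^sub>R x))
     = (1/4) * h u (T u) + (complex_of_real t * Am x u + (complex_of_real t)\<^sup>2 * Bc x)"
    unfolding Am_def Bc_def r2 mult.assoc[symmetric] r1
    by (simp add: hl Tl sy field_simps)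
  have "weyl s J ((sqrt 2 * t) *\<^sub>R x) F u = exp ((1/4) * h (2 *\<^sub>R u - r *\<^sub>R x) (r *\<^sub>R x)) *
      exp ((1/4) * h (u - r *\<^sub>R x) (T (u - r *\<^sub>R x)))"
    unfolding weyl_def gaussian_def r_def ..
  also have "\<dots> = exp ((1/4) * h u (T u) + (complex_of_real t * Am x u + (complex_of_real t)\<^sup>2 * Bc x))"
    by (simp only: exp_add[symmetric] e)
  also have "\<dots> = F u * exp (complex_of_real t * Am x u + (complex_of_real t)\<^sup>2 * Bc x)"
    unfolding gaussian_def exp_add ..
  finally show ?thesis .
qed

lemma amgm: fixes c k r :: real assumes "c > 0"
  shows "k * r - c * r\<^sup>2 \<le> k\<^sup>2 / (2 * c) - (c / 2) * r\<^sup>2"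
proof -
  have "0 \<le> (c / 2) * (r - k / c)\<^sup>2" using assms by simp
  also have "\<dots> = (c / 2) * r\<^sup>2 - k * r + k\<^sup>2 / (2 * c)"
    using assms by (simp add: power2_eq_square field_simps)
  finally show ?thesis by linarith
qed

lemma normF2: "(cmod (F u))\<^sup>2 = exp ((1/2) * s u (J (T u)))"
proof -
  have "cmod (F u) = exp ((1/4) * s u (J (T u)))"
    by (simp add: gaussian_def Re_h)
  then show ?thesis by (simp add: power2_eq_square exp_add[symmetric])
qed

lemma Fw: "\<exists>c>0. \<forall>u. (cmod (F u))\<^sup>2 * exp (- (1/2) * s u (J u)) \<le> exp (- c * (norm u)\<^sup>2)"
proof -
  obtain c where c: "c > 0" "\<And>u. c * (norm u)\<^sup>2 \<le> s u (J u) - s u (J (T u))" using Tpos by blast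
  have "(cmod (F u))\<^sup>2 * exp (- (1/2) * s u (J u)) \<le> exp (- (c/2) * (norm u)\<^sup>2)" for u
  proof -
    have "(cmod (F u))\<^sup>2 * exp (- (1/2) * s u (J u)) = exp ((1/2) * s u (J (T u)) - (1/2) * s u (J u))"
      unfolding normF2 exp_add[symmetric] by (simp add: algebra_simps)
    also have "\<dots> \<le> exp (- (c/2) * (norm u)\<^sup>2)"
      using c(2)[of u] by simp
    finally show ?thesis .
  qed
  then show ?thesis using c(1) by (intro exI[of _ "c/2"]) auto
qed

lemma Am_bound: "\<exists>a\<ge>0. \<forall>u. cmod (Am x u) \<le> a * norm u"
proof -
  obtain K where K: "K \<ge> 0" "\<And>a b. norm (h a b) \<le> norm a * norm b * K"
    using bounded_bilinear.nonneg_bounded[OF bbh] by blast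
  have "cmod (Am x u) \<le> (sqrt 2 / 2 * norm (x - T x) * K) * norm u" for u
  proof -
    have e: "Am x u = complex_of_real (sqrt 2 / 2) * h u (x - T x)" by (simp add: Am_def hl)
    have "cmod (Am x u) = cmod (complex_of_real (sqrt 2 / 2) * h u (x - T x))" by (simp only: e)
    also have "\<dots> = sqrt 2 / 2 * norm (h u (x - T x))" by (simp add: norm_mult)
    also have "\<dots> \<le> sqrt 2 / 2 * (norm u * norm (x - T x) * K)"
      using K(2) by (intro mult_left_mono) auto
    finally show ?thesis by (simp add: algebra_simps)
  qed
  then show ?thesis using K(1) by (intro exI[of _ "sqrt 2 / 2 * norm (x - T x) * K"]) auto
qed

lemma fock_bound:
  fixes H :: "'v \<Rightarrow> complex"
  assumes c: "c > 0" and M: "M \<ge> 0"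
    and b: "\<And>u. (cmod (H u))\<^sup>2 * exp (- (1/2) * s u (J u)) \<le> M * exp (- c * (norm u)\<^sup>2)"
  shows "fock_norm2 s J H \<le> ennreal (inverse ((2 * pi) ^ (DIM('v) div 2)) * M *
            enn2real (\<integral>\<^sup>+u. ennreal (exp (- c * (norm u)\<^sup>2)) \<partial>(lborel :: 'v measure)))"
proof -
  define I where "I = (\<integral>\<^sup>+u. ennreal (exp (- c * (norm u)\<^sup>2)) \<partial>(lborel :: 'v measure))"
  have If: "I < \<infinity>" unfolding I_def using gauss_finite[OF c] .
  have "(\<integral>\<^sup>+ u. ennreal ((cmod (H u))\<^sup>2 * exp (- (1/2) * s u (J u))) \<partial>lborel)
      \<le> (\<integral>\<^sup>+ u. ennreal M * ennreal (exp (- c * (norm (u::'v))\<^sup>2)) \<partial>lborel)"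
    apply (rule nn_integral_mono)
    using b by (simp add: ennreal_mult[symmetric] M ennreal_leI)
  also have "\<dots> = ennreal M * I"
    unfolding I_def by (rule nn_integral_cmult) simp
  also have "\<dots> = ennreal M * ennreal (enn2real I)"
    using If by simp
  also have "\<dots> = ennreal (M * enn2real I)"
    by (rule ennreal_mult'[symmetric]) (rule M)
  finally have "(\<integral>\<^sup>+ u. ennreal ((cmod (H u))\<^sup>2 * exp (- (1/2) * s u (J u))) \<partial>lborel) \<le> ennreal (M * enn2real I)" .
  then have "fock_norm2 s J H \<le> ennreal (inverse ((2 * pi) ^ (DIM('v) div 2))) * ennreal (M * enn2real I)"
    unfolding fock_norm2_def by (intro mult_left_mono) auto
  also have "\<dots> = ennreal (inverse ((2 * pi) ^ (DIM('v) div 2)) * M * enn2real I)"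
    by (subst ennreal_mult'[symmetric]) (auto simp: mult.assoc)
  finally show ?thesis unfolding I_def .
qed

definition E :: "real \<Rightarrow> 'v \<Rightarrow> 'v \<Rightarrow> complex" where
  "E t x u = (weyl s J ((sqrt 2 * t) *\<^sub>R x) F u - F u) / complex_of_real t - \<i> * G x u"

lemma E_eq: "E t x u = F u * ((exp (complex_of_real t * Am x u + (complex_of_real t)\<^sup>2 * Bc x) - 1) / complex_of_real t - Am x u)"
proof -
  have "\<i> * G x u = F u * Am x u" by (simp add: G_def mult.assoc)
  then show ?thesis unfolding E_def weyl_eq by (simp add: algebra_simps diff_divide_distrib)
qed

lemma E_bound: "\<exists>c>0. \<exists>K\<ge>0. \<forall>t u. t \<noteq> 0 \<longrightarrow> \<bar>t\<bar> \<le> 1 \<longrightarrow>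
   (cmod (E t x u))\<^sup>2 * exp (- (1/2) * s u (J u)) \<le> (t\<^sup>2 * K) * exp (- c * (norm u)\<^sup>2)"
proof -
  obtain c where c: "c > 0" "\<And>u. (cmod (F u))\<^sup>2 * exp (- (1/2) * s u (J u)) \<le> exp (- c * (norm u)\<^sup>2)"
    using Fw by blast
  obtain a where a: "a \<ge> 0" "\<And>u. cmod (Am x u) \<le> a * norm u" using Am_bound by blast
  define b where "b = cmod (Bc x)"
  have b0: "b \<ge> 0" by (simp add: b_def)
  define K where "K = (4 + b)\<^sup>2 * exp (4 * b) * exp ((4 * a)\<^sup>2 / (2 * c))"
  have K0: "K \<ge> 0" by (simp add: K_def)
  have "(cmod (E t x u))\<^sup>2 * exp (- (1/2) * s u (J u)) \<le> (t\<^sup>2 * K) * exp (- (c/2) * (norm u)\<^sup>2)"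
    if t0: "t \<noteq> 0" and t1: "\<bar>t\<bar> \<le> 1" for t u
  proof -
    define fF where "fF = (cmod (F u))\<^sup>2"
    define w where "w = exp (- (1/2) * s u (J u))"
    define nA where "nA = cmod (Am x u)"
    define r where "r = norm u"
    have fF0: "fF \<ge> 0" and w0: "w \<ge> 0" and nA0: "nA \<ge> 0" and r0: "r \<ge> 0"
      by (simp_all add: fF_def w_def nA_def r_def)
    have h1: "cmod (E t x u) \<le> cmod (F u) * (\<bar>t\<bar> * (4 + b) * exp (2 * (nA + b)))"
      unfolding E_eq norm_mult nA_def b_def
      by (intro mult_left_mono qbound t0 t1) simp
    have h2: "(cmod (E t x u))\<^sup>2 \<le> fF * (t\<^sup>2 * (4 + b)\<^sup>2 * exp (4 * (nA + b)))"
    proof -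
      have "(cmod (E t x u))\<^sup>2 \<le> (cmod (F u) * (\<bar>t\<bar> * (4 + b) * exp (2 * (nA + b))))\<^sup>2"
        using h1 by (intro power_mono) auto
      also have "\<dots> = fF * (t\<^sup>2 * (4 + b)\<^sup>2 * (exp (2 * (nA + b)))\<^sup>2)"
        by (simp add: fF_def power_mult_distrib)
      also have "(exp (2 * (nA + b)))\<^sup>2 = exp (4 * (nA + b))"
        by (simp add: power2_eq_square exp_add[symmetric])
      finally show ?thesis .
    qed
    have h3: "fF * w \<le> exp (- c * r\<^sup>2)" using c(2)[of u] by (simp add: fF_def w_def r_def)
    have h4: "exp (4 * (nA + b)) \<le> exp (4 * b) * exp (4 * a * r)"
    proof -
      have "nA \<le> a * r" using a(2)[of u] by (simp add: nA_def r_def)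
      then have "exp (4 * (nA + b)) \<le> exp (4 * b + 4 * a * r)" by simp
      then show ?thesis by (simp add: exp_add)
    qed
    have h5: "exp (4 * a * r) * exp (- c * r\<^sup>2) \<le> exp ((4 * a)\<^sup>2 / (2 * c)) * exp (- (c/2) * r\<^sup>2)"
    proof -
      have "4 * a * r - c * r\<^sup>2 \<le> (4 * a)\<^sup>2 / (2 * c) - (c / 2) * r\<^sup>2" by (rule amgm[OF c(1)])
      then have "exp (4 * a * r + - c * r\<^sup>2) \<le> exp ((4 * a)\<^sup>2 / (2 * c) + - (c/2) * r\<^sup>2)" by simp
      then show ?thesis by (simp only: exp_add)
    qed
    define P where "P = t\<^sup>2 * (4 + b)\<^sup>2"
    have P0: "P \<ge> 0" by (simp add: P_def)
    have "(cmod (E t x u))\<^sup>2 * w \<le> fF * (P * exp (4 * (nA + b))) * w"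
      using h2 w0 by (intro mult_right_mono) (auto simp: P_def mult.assoc)
    also have "\<dots> = P * exp (4 * (nA + b)) * (fF * w)" by (simp add: algebra_simps)
    also have "\<dots> \<le> P * (exp (4 * b) * exp (4 * a * r)) * exp (- c * r\<^sup>2)"
      using h3 h4 P0 fF0 w0 by (intro mult_mono mult_left_mono) auto
    also have "\<dots> = P * exp (4 * b) * (exp (4 * a * r) * exp (- c * r\<^sup>2))" by (simp add: algebra_simps)
    also have "\<dots> \<le> P * exp (4 * b) * (exp ((4 * a)\<^sup>2 / (2 * c)) * exp (- (c/2) * r\<^sup>2))"
      using h5 P0 by (intro mult_left_mono) auto
    also have "\<dots> = (t\<^sup>2 * K) * exp (- (c/2) * r\<^sup>2)" by (simp add: P_def K_def algebra_simps)
    finally show ?thesis by (simp add: w_def r_def)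
  qed
  then show ?thesis using c(1) K0 by (intro exI[of _ "c/2"] conjI exI[of _ K]) auto
qed

lemma F_bound: "\<exists>c>0. \<forall>u. (cmod (F u))\<^sup>2 * exp (- (1/2) * s u (J u)) \<le> 1 * exp (- c * (norm u)\<^sup>2)"
  using Fw by simp

lemma G_bound: "\<exists>c>0. \<exists>K\<ge>0. \<forall>u. (cmod (G x u))\<^sup>2 * exp (- (1/2) * s u (J u)) \<le> K * exp (- c * (norm u)\<^sup>2)"
proof -
  obtain c where c: "c > 0" "\<And>u. (cmod (F u))\<^sup>2 * exp (- (1/2) * s u (J u)) \<le> exp (- c * (norm u)\<^sup>2)"
    using Fw by blast
  obtain a where a: "a \<ge> 0" "\<And>u. cmod (Am x u) \<le> a * norm u" using Am_bound by blast
  define K where "K = 4 * exp (a\<^sup>2 / (2 * c))"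
  have "(cmod (G x u))\<^sup>2 * exp (- (1/2) * s u (J u)) \<le> K * exp (- (c/2) * (norm u)\<^sup>2)" for u
  proof -
    define fF where "fF = (cmod (F u))\<^sup>2"
    define w where "w = exp (- (1/2) * s u (J u))"
    define nA where "nA = cmod (Am x u)"
    define r where "r = norm u"
    have fF0: "fF \<ge> 0" and w0: "w \<ge> 0" and nA0: "nA \<ge> 0" and r0: "r \<ge> 0"
      by (simp_all add: fF_def w_def nA_def r_def)
    have g: "(cmod (G x u))\<^sup>2 = fF * nA\<^sup>2" by (simp add: G_def norm_mult fF_def nA_def power_mult_distrib)
    have h1: "nA\<^sup>2 \<le> 4 * exp (a * r)"
    proof -
      have "nA\<^sup>2 \<le> 4 * exp nA" by (rule sq_le_exp[OF nA0])
      also have "nA \<le> a * r" using a(2)[of u] by (simp add: nA_def r_def)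
      then have "4 * exp nA \<le> 4 * exp (a * r)" by simp
      finally show ?thesis .
    qed
    have h3: "fF * w \<le> exp (- c * r\<^sup>2)" using c(2)[of u] by (simp add: fF_def w_def r_def)
    have h5: "exp (a * r) * exp (- c * r\<^sup>2) \<le> exp (a\<^sup>2 / (2 * c)) * exp (- (c/2) * r\<^sup>2)"
    proof -
      have "a * r - c * r\<^sup>2 \<le> a\<^sup>2 / (2 * c) - (c / 2) * r\<^sup>2" by (rule amgm[OF c(1)])
      then have "exp (a * r + - c * r\<^sup>2) \<le> exp (a\<^sup>2 / (2 * c) + - (c/2) * r\<^sup>2)" by simp
      then show ?thesis by (simp only: exp_add)
    qed
    have "(cmod (G x u))\<^sup>2 * w = nA\<^sup>2 * (fF * w)" unfolding g by (simp add: algebra_simps)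
    also have "\<dots> \<le> (4 * exp (a * r)) * exp (- c * r\<^sup>2)"
      using h1 h3 fF0 w0 by (intro mult_mono) auto
    also have "\<dots> = 4 * (exp (a * r) * exp (- c * r\<^sup>2))" by simp
    also have "\<dots> \<le> 4 * (exp (a\<^sup>2 / (2 * c)) * exp (- (c/2) * r\<^sup>2))"
      using h5 by simp
    also have "\<dots> = K * exp (- (c/2) * r\<^sup>2)" by (simp add: K_def)
    finally show ?thesis by (simp add: w_def r_def)
  qed
  then show ?thesis using c(1) by (intro exI[of _ "c/2"] conjI exI[of _ K]) (auto simp: K_def)
qed

lemma fock_finite:
  assumes "\<exists>c>0. \<exists>K\<ge>0. \<forall>u. (cmod (H u))\<^sup>2 * exp (- (1/2) * s u (J u)) \<le> K * exp (- c * (norm u)\<^sup>2)"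
  shows "fock_norm2 s J H < \<infinity>"
proof -
  obtain c K where "c > 0" "K \<ge> 0" "\<And>u. (cmod (H u))\<^sup>2 * exp (- (1/2) * s u (J u)) \<le> K * exp (- c * (norm u)\<^sup>2)"
    using assms by blast
  from fock_bound[OF this] show ?thesis using le_less_trans by fastforce
qed

lemma linAm: "linear (Am x)"
  by (rule linearI) (simp_all add: Am_def hl scaleR_conv_of_real algebra_simps)

lemma AmJ: "Am x (J w) = - \<i> * Am x w"
  by (simp add: Am_def hJl algebra_simps)

definition DF :: "'v \<Rightarrow> 'v \<Rightarrow> complex" where
  "DF u w = F u * ((1/4) * (h u (T w) + h w (T u)))"

lemma F_deriv: "(F has_derivative DF u) (at u)"
proof -
  have q: "((\<lambda>u. h u (T u)) has_derivative (\<lambda>w. h u (T w) + h w (T u))) (at u)"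
    using bounded_bilinear.FDERIV[OF bbh has_derivative_ident linear_imp_has_derivative[OF linT]] by simp
  have q2: "((\<lambda>u. (1/4) * h u (T u)) has_derivative (\<lambda>w. (1/4) * (h u (T w) + h w (T u)))) (at u)"
    using has_derivative_mult[OF has_derivative_const[of "1/4"] q] by simp
  have e: "(exp has_derivative (\<lambda>w. exp ((1/4) * h u (T u)) * w)) (at ((1/4) * h u (T u)))"
    using has_field_derivative_imp_has_derivative[OF DERIV_exp] by simp
  show ?thesis
    using has_derivative_compose[OF q2 e] by (simp add: DF_def[abs_def] gaussian_def)
qed

lemma DF_J: "DF u (J w) = - \<i> * DF u w"
  by (simp add: DF_def TJ hl hJr hJl algebra_simps)

lemma antiholo_F: "antiholomorphic J F"
  unfolding antiholomorphic_def using F_deriv DF_J by blast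

lemma antiholo_G: "antiholomorphic J (G x)"
  unfolding antiholomorphic_def
proof
  fix u
  have a: "(Am x has_derivative Am x) (at u)" by (rule linear_imp_has_derivative[OF linAm])
  have f: "((\<lambda>u. - \<i> * F u) has_derivative (\<lambda>w. - \<i> * DF u w)) (at u)"
    using has_derivative_mult[OF has_derivative_const[of "- \<i>"] F_deriv] by simp
  have "((\<lambda>u. - \<i> * F u * Am x u) has_derivative (\<lambda>w. - \<i> * F u * Am x w + - \<i> * DF u w * Am x u)) (at u)"
    using has_derivative_mult[OF f a] by simp
  moreover have "\<forall>w. - \<i> * F u * Am x (J w) + - \<i> * DF u (J w) * Am x u
      = - \<i> * (- \<i> * F u * Am x w + - \<i> * DF u w * Am x u)"
    by (simp add: AmJ DF_J algebra_simps)
  ultimately show "\<exists>D. (G x has_derivative D) (at u) \<and> (\<forall>w. D (J w) = - \<i> * D w)"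
    unfolding G_def[abs_def] by blast
qed

lemma F_fock: "F \<in> fock_space s J"
proof -
  have "fock_norm2 s J F < \<infinity>"
  proof (rule fock_finite)
    obtain c where c: "c > 0" "\<And>u. (cmod (F u))\<^sup>2 * exp (- (1/2) * s u (J u)) \<le> exp (- c * (norm u)\<^sup>2)"
      using Fw by blast
    show "\<exists>c>0. \<exists>K\<ge>0. \<forall>u. (cmod (F u))\<^sup>2 * exp (- (1/2) * s u (J u)) \<le> K * exp (- c * (norm u)\<^sup>2)"
      using c by (intro exI[of _ c] conjI exI[of _ 1]) auto
  qed
  then show ?thesis using antiholo_F by (simp add: fock_space_def)
qed

lemma G_fock: "G x \<in> fock_space s J"
proof -
  have "fock_norm2 s J (G x) < \<infinity>"
    by (rule fock_finite) (rule G_bound)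
  then show ?thesis using antiholo_G by (simp add: fock_space_def)
qed

lemma phi_G: "has_phi s J x F (G x)"
proof -
  obtain c K where c: "c > 0" "K \<ge> 0" and b: "\<And>t u. t \<noteq> 0 \<Longrightarrow> \<bar>t\<bar> \<le> 1 \<Longrightarrow>
      (cmod (E t x u))\<^sup>2 * exp (- (1/2) * s u (J u)) \<le> (t\<^sup>2 * K) * exp (- c * (norm u)\<^sup>2)"
    using E_bound[of x] by blast
  define C where "C = inverse ((2 * pi) ^ (DIM('v) div 2)) * K *
            enn2real (\<integral>\<^sup>+u. ennreal (exp (- c * (norm u)\<^sup>2)) \<partial>(lborel :: 'v measure))"
  have ev0: "fock_norm2 s J (E t x) \<le> ennreal (C * t\<^sup>2)" if t0: "t \<noteq> 0" and t1: "\<bar>t\<bar> \<le> 1" for t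
  proof -
    have "fock_norm2 s J (E t x) \<le> ennreal (inverse ((2 * pi) ^ (DIM('v) div 2)) * (t\<^sup>2 * K) *
            enn2real (\<integral>\<^sup>+u. ennreal (exp (- c * (norm u)\<^sup>2)) \<partial>(lborel :: 'v measure)))"
      using c by (intro fock_bound b t0 t1) auto
    also have "\<dots> = ennreal (C * t\<^sup>2)" by (simp add: C_def algebra_simps)
    finally show ?thesis .
  qed
  have ev: "eventually (\<lambda>t. fock_norm2 s J (E t x) \<le> ennreal (C * t\<^sup>2)) (at (0::real))"
    unfolding eventually_at using ev0 by (intro exI[of _ 1]) auto
  have lim: "((\<lambda>t. ennreal (C * t\<^sup>2)) \<longlongrightarrow> 0) (at (0::real))"
  proof -
    have "((\<lambda>t. C * t\<^sup>2) \<longlongrightarrow> C * 0\<^sup>2) (at (0::real))" by (intro tendsto_intros)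
    then have "((\<lambda>t. ennreal (C * t\<^sup>2)) \<longlongrightarrow> ennreal (C * 0\<^sup>2)) (at (0::real))" by (rule tendsto_ennrealI)
    then show ?thesis by simp
  qed
  have "((\<lambda>t. fock_norm2 s J (E t x)) \<longlongrightarrow> 0) (at (0::real))"
    by (rule tendsto_sandwich[OF _ ev tendsto_const lim]) simp
  then show ?thesis
    unfolding has_phi_def E_def[abs_def] using F_fock G_fock by simp
qed

lemma main: "has_a s J (g \<circ> J \<circ> inv g) (g v) F (\<lambda>u. 0)"
proof -
  have K: "(g \<circ> J \<circ> inv g) (g v) = g (J v)" using injG by simp
  have R: "\<forall>u. 0 = (G (g v) u + \<i> * G (g (J v)) u) / 2"
  proof
    fix u
    have a1: "Am (g v) u = complex_of_real (sqrt 2 / 2) * h u (R v)" by (simp add: Am_def R_def hl)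
    have a2: "Am (g (J v)) u = complex_of_real (sqrt 2 / 2) * h u (R (J v))" by (simp add: Am_def R_def hl)
    have a3: "h u (R (J v)) = \<i> * h u (R v)" by (simp add: RJ hJr)
    show "0 = (G (g v) u + \<i> * G (g (J v)) u) / 2"
      by (simp add: G_def a1 a2 a3 algebra_simps)
  qed
  show ?thesis unfolding has_a_def K using phi_G R by blast
qed

end

theorem lemma4p5:
  fixes s :: "'v::euclidean_space \<Rightarrow> 'v \<Rightarrow> real" and J g :: "'v \<Rightarrow> 'v"
  assumes "bilinear s"
    and "\<forall>u v. s u v = - s v u"
    and "\<forall>u. (\<forall>v. s u v = 0) \<longrightarrow> u = 0"
    and "linear J"
    and "\<forall>v. J (J v) = - v"
    and "\<forall>u v. s (J u) (J v) = s u v"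
    and "\<forall>u. u \<noteq> 0 \<longrightarrow> s u (J u) > 0"
    and "symplectic s g"
  shows "\<forall>v. has_a s J (g \<circ> J \<circ> inv g) (g v) (gaussian s J (T_op J g)) (\<lambda>u. 0)"
proof -
  have "sympl s J g"
    using assms unfolding sympl_def by (intro conjI) assumption+
  then interpret sympl s J g .
  show ?thesis using main by blast
qed

end
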